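(* Let $\mathcal X=\mathcal X_1\times\cdots\times\mathcal X_b$, $\mathcal X_i=\mathbb R^{m_i\times n_i}$ with trace inner product and norms $\|\cdot\|_{(i)}$ (dual $\|\cdot\|_{(i)\star}$), $f$ continuously differentiable with $f\ge f^\star$, $\mathcal D$ a distribution on subsets of $[b]$, and assume constants $L^0_{i,S},L^1_{i,S}\ge0$ exist such that for all $S\in\operatorname{supp}(\mathcal D)$, $X\in\mathcal X$ and $\Gamma$ with $\Gamma_i=0$ for $i\notin S$: $f(X+\Gamma)-f(X)-\langle\nabla f(X),\Gamma\rangle\le\sum_{i\in S}\frac{L^0_{i,S}+L^1_{i,S}\|\nabla_if(X)\|_{(i)\star}}2\|\Gamma_i\|_{(i)}^2$. Let $S\in\operatorname{supp}(\mathcal D)$. Then for all $X\in\mathcal X$, $$\sum_{i\in S}\frac{\|\nabla_if(X)\|_{(i)\star}^2}{2\left(L^0_{i,S}+L^1_{i,S}\|\nabla_if(X)\|_{(i)\star}\right)}\le f(X)-f^\star.$$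
   Context: $\operatorname{supp}(\mathcal D)$ is the set of subsets of $[b]$ with positive probability under $\mathcal D$. *)

theory Defs
  imports "HOL-Analysis.Analysis" "HOL-Probability.Probability_Mass_Function"
begin

text \<open>Real m x n matrices are represented by their entry functions
  A :: nat \<Rightarrow> nat \<Rightarrow> real (row, column; 0-based), required to vanish
  outside the index range r < m, c < n.\<close>

definition mats :: "nat \<Rightarrow> nat \<Rightarrow> (nat \<Rightarrow> nat \<Rightarrow> real) set" where
  "mats m n = {A. \<forall>r c. (r < m \<and> c < n) \<or> A r c = 0}"

definition tr_inner :: "nat \<Rightarrow> nat \<Rightarrow> (nat \<Rightarrow> nat \<Rightarrow> real) \<Rightarrow> (nat \<Rightarrow> nat \<Rightarrow> real) \<Rightarrow> real" where
  "tr_inner m n A B = (\<Sum>r<m. \<Sum>c<n. A r c * B r c)"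

definition is_norm_on_mats :: "nat \<Rightarrow> nat \<Rightarrow> ((nat \<Rightarrow> nat \<Rightarrow> real) \<Rightarrow> real) \<Rightarrow> bool" where
  "is_norm_on_mats m n N \<longleftrightarrow>
     (\<forall>A\<in>mats m n. 0 \<le> N A) \<and>
     (\<forall>A\<in>mats m n. N A = 0 \<longleftrightarrow> A = (\<lambda>r c. 0)) \<and>
     (\<forall>A\<in>mats m n. \<forall>t::real. N (\<lambda>r c. t * A r c) = \<bar>t\<bar> * N A) \<and>
     (\<forall>A\<in>mats m n. \<forall>B\<in>mats m n. N (\<lambda>r c. A r c + B r c) \<le> N A + N B)"

definition dual_norm :: "nat \<Rightarrow> nat \<Rightarrow> ((nat \<Rightarrow> nat \<Rightarrow> real) \<Rightarrow> real) \<Rightarrow> (nat \<Rightarrow> nat \<Rightarrow> real) \<Rightarrow> real" where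
  "dual_norm m n N G = Sup {tr_inner m n G A | A. A \<in> mats m n \<and> N A \<le> 1}"

text \<open>The product space X_1 x ... x X_b (blocks indexed 0..<b, block i being
  m i x n i matrices) is represented as real^'k, where the finite index type 'k
  is put in bijection with the entry positions (i, r, c) via idx.
  blk idx m n X i is the i-th block of X, as an m i x n i matrix.\<close>
definition blk :: "('k::finite \<Rightarrow> nat \<times> nat \<times> nat) \<Rightarrow> (nat \<Rightarrow> nat) \<Rightarrow> (nat \<Rightarrow> nat)
     \<Rightarrow> real^'k \<Rightarrow> nat \<Rightarrow> (nat \<Rightarrow> nat \<Rightarrow> real)" where
  "blk idx m n X i = (\<lambda>r c. if r < m i \<and> c < n i then X $ (inv idx (i, r, c)) else 0)"

definition prod_inner :: "nat \<Rightarrow> ('k::finite \<Rightarrow> nat \<times> nat \<times> nat) \<Rightarrow> (nat \<Rightarrow> nat) \<Rightarrow> (nat \<Rightarrow> nat)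
     \<Rightarrow> real^'k \<Rightarrow> real^'k \<Rightarrow> real" where
  "prod_inner b idx m n X Y = (\<Sum>i<b. tr_inner (m i) (n i) (blk idx m n X i) (blk idx m n Y i))"

end

theory Submission
  imports Defs
begin

theorem lemma11:
  fixes b :: nat and m n :: "nat \<Rightarrow> nat"
    and idx :: "'k::finite \<Rightarrow> nat \<times> nat \<times> nat"
    and N :: "nat \<Rightarrow> (nat \<Rightarrow> nat \<Rightarrow> real) \<Rightarrow> real"
    and f :: "real^'k \<Rightarrow> real" and gradf :: "real^'k \<Rightarrow> real^'k"
    and fstar :: real
    and D :: "nat set pmf"
    and L0 L1 :: "nat \<Rightarrow> nat set \<Rightarrow> real"
    and S :: "nat set" and X :: "real^'k"
  assumes idx: "bij_betw idx UNIV {(i, r, c). i < b \<and> r < m i \<and> c < n i}"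
    and norms: "\<forall>i<b. is_norm_on_mats (m i) (n i) (N i)"
    and grad: "\<forall>Y. (f has_derivative (\<lambda>H. prod_inner b idx m n (gradf Y) H)) (at Y)"
    and grad_cont: "continuous_on UNIV gradf"
    and lower: "\<forall>Y. fstar \<le> f Y"
    and D_subsets: "\<forall>T\<in>set_pmf D. T \<subseteq> {..<b}"
    and L_nonneg: "\<forall>T\<in>set_pmf D. \<forall>i\<in>T. 0 \<le> L0 i T \<and> 0 \<le> L1 i T"
    and smooth: "\<forall>T\<in>set_pmf D. \<forall>Y \<Gamma>.
        (\<forall>i<b. i \<notin> T \<longrightarrow> blk idx m n \<Gamma> i = (\<lambda>r c. 0)) \<longrightarrow>
        f (Y + \<Gamma>) - f Y - prod_inner b idx m n (gradf Y) \<Gamma>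
          \<le> (\<Sum>i\<in>T. (L0 i T + L1 i T * dual_norm (m i) (n i) (N i) (blk idx m n (gradf Y) i)) / 2
                     * (N i (blk idx m n \<Gamma> i))^2)"
    and S: "S \<in> set_pmf D"
  shows "(\<Sum>i\<in>S. (dual_norm (m i) (n i) (N i) (blk idx m n (gradf X) i))^2
            / (2 * (L0 i S + L1 i S * dual_norm (m i) (n i) (N i) (blk idx m n (gradf X) i))))
         \<le> f X - fstar"
  proof -
  define g where "g i = blk idx m n (gradf X) i" for i
  define d where "d i = dual_norm (m i) (n i) (N i) (g i)" for i
  define L where "L i = L0 i S + L1 i S * d i" for i
  define mkG where "mkG B = (\<chi> k. case idx k of (j, r, c) \<Rightarrow> if j \<in> S then B j r c else (0::real))"
    for B :: "nat \<Rightarrow> nat \<Rightarrow> nat \<Rightarrow> real"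
  have Sb: "S \<subseteq> {..<b}" using D_subsets S by auto
  have finS: "finite S" using Sb finite_subset by blast
  have idxinv: "idx (inv idx (j, r, c)) = (j, r, c)" if "j < b" "r < m j" "c < n j" for j r c
  proof -
    have "(j, r, c) \<in> range idx" using idx that unfolding bij_betw_def by auto
    then show ?thesis by (simp add: f_inv_into_f)
  qed
  have blkG: "blk idx m n (mkG B) j = (if j \<in> S then B j else (\<lambda>r c. 0))"
    if "j < b" "\<forall>i\<in>S. B i \<in> mats (m i) (n i)" for B j
  proof (rule ext, rule ext)
    fix r c
    show "blk idx m n (mkG B) j r c = (if j \<in> S then B j else (\<lambda>r c. 0)) r c"
    proof (cases "r < m j \<and> c < n j")
      case True
      then show ?thesis using idxinv[of j r c] that(1) by (simp add: blk_def mkG_def)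
    next
      case False
      then show ?thesis using that unfolding blk_def mats_def by auto
    qed
  qed
  have Nnn: "0 \<le> N i A" if "i \<in> S" "A \<in> mats (m i) (n i)" for i A
    using norms that Sb unfolding is_norm_on_mats_def by auto
  have N0: "N i (\<lambda>r c. 0) = 0" if "i \<in> S" for i
  proof -
    have "(\<lambda>r c. 0::real) \<in> mats (m i) (n i)" by (simp add: mats_def)
    then show ?thesis using norms that Sb unfolding is_norm_on_mats_def by auto
  qed
  have Nscale: "N i (\<lambda>r c. t * A r c) = \<bar>t\<bar> * N i A" if "i \<in> S" "A \<in> mats (m i) (n i)" for i A t
    using norms that Sb unfolding is_norm_on_mats_def by auto
  have mats_scale: "(\<lambda>r c. t * A r c) \<in> mats mm nn" if "A \<in> mats mm nn" for A t mm nn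
    using that unfolding mats_def by auto
  have tr_scale: "tr_inner mm nn G (\<lambda>r c. t * A r c) = t * tr_inner mm nn G A" for mm nn G A t
    unfolding tr_inner_def by (simp add: sum_distrib_left algebra_simps)
  have trneg: "tr_inner mm nn G (\<lambda>r c. - A r c) = - tr_inner mm nn G A" for mm nn G A
    unfolding tr_inner_def by (simp add: sum_negf)
  have tr0: "tr_inner mm nn G (\<lambda>r c. 0) = 0" for mm nn G
    unfolding tr_inner_def by simp
  have key: "fstar \<le> f X + (\<Sum>i\<in>S. tr_inner (m i) (n i) (g i) (B i) + L i / 2 * (N i (B i))^2)"
    if BM: "\<forall>i\<in>S. B i \<in> mats (m i) (n i)" for B
  proof -
    have c1: "\<forall>i<b. i \<notin> S \<longrightarrow> blk idx m n (mkG B) i = (\<lambda>r c. 0)"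
      using blkG[OF _ BM] by auto
    have sm: "f (X + mkG B) - f X - prod_inner b idx m n (gradf X) (mkG B)
          \<le> (\<Sum>i\<in>S. (L0 i S + L1 i S * dual_norm (m i) (n i) (N i) (blk idx m n (gradf X) i)) / 2
                     * (N i (blk idx m n (mkG B) i))^2)"
      using smooth S c1 by blast
    have rhs: "(\<Sum>i\<in>S. (L0 i S + L1 i S * dual_norm (m i) (n i) (N i) (blk idx m n (gradf X) i)) / 2
                     * (N i (blk idx m n (mkG B) i))^2) = (\<Sum>i\<in>S. L i / 2 * (N i (B i))^2)"
      by (rule sum.cong) (use blkG[OF _ BM] Sb in \<open>auto simp: L_def d_def g_def\<close>)
    have "prod_inner b idx m n (gradf X) (mkG B)
        = (\<Sum>i<b. if i \<in> S then tr_inner (m i) (n i) (g i) (B i) else 0)"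
      unfolding prod_inner_def
      by (rule sum.cong) (use blkG[OF _ BM] tr0 in \<open>auto simp: g_def\<close>)
    also have "\<dots> = (\<Sum>i\<in>S. tr_inner (m i) (n i) (g i) (B i))"
      using Sb by (simp add: sum.If_cases Int_absorb1)
    finally have pi: "prod_inner b idx m n (gradf X) (mkG B) = (\<Sum>i\<in>S. tr_inner (m i) (n i) (g i) (B i))" .
    have "fstar \<le> f (X + mkG B)" using lower by blast
    then show ?thesis using sm rhs pi by (simp add: sum.distrib)
  qed
  define Q where "Q i = {tr_inner (m i) (n i) (g i) A | A. A \<in> mats (m i) (n i) \<and> N i A \<le> 1}" for i
  have dQ: "d i = Sup (Q i)" for i unfolding d_def Q_def dual_norm_def by simp
  have zQ: "0 \<in> Q i" if "i \<in> S" for i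
  proof -
    have "(\<lambda>r c. 0::real) \<in> mats (m i) (n i)" by (simp add: mats_def)
    then show ?thesis unfolding Q_def using N0[OF that] tr0 by force
  qed
  have bddQ: "bdd_above (Q i)" if iS: "i \<in> S" for i
  proof (rule bdd_aboveI)
    fix x assume "x \<in> Q i"
    then obtain A where A: "A \<in> mats (m i) (n i)" "N i A \<le> 1" "x = tr_inner (m i) (n i) (g i) A"
      unfolding Q_def by auto
    define B where "B j = (if j = i then (\<lambda>r c. (-1) * A r c) else (\<lambda>r c. 0))" for j
    have BM: "\<forall>j\<in>S. B j \<in> mats (m j) (n j)"
      using A mats_scale by (auto simp: B_def mats_def)
    have "(\<Sum>j\<in>S. tr_inner (m j) (n j) (g j) (B j) + L j / 2 * (N j (B j))^2)
        = (\<Sum>j\<in>S. if j = i then - x + L i / 2 * (N i A)^2 else 0)"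
      by (rule sum.cong) (use A trneg tr_scale tr0 N0 Nscale[OF iS A(1), of "-1"] in \<open>auto simp: B_def\<close>)
    also have "\<dots> = - x + L i / 2 * (N i A)^2" using finS iS by simp
    finally have "fstar \<le> f X - x + L i / 2 * (N i A)^2" using key[OF BM] by simp
    moreover have "(N i A)^2 \<le> 1" using Nnn[OF iS A(1)] A(2) by (simp add: power_le_one)
    moreover have "L i / 2 * (N i A)^2 \<le> \<bar>L i\<bar> / 2"
    proof -
      have "L i / 2 * (N i A)^2 \<le> \<bar>L i\<bar> / 2 * (N i A)^2"
        by (rule mult_right_mono) auto
      also have "\<dots> \<le> \<bar>L i\<bar> / 2" using \<open>(N i A)^2 \<le> 1\<close>
        by (simp add: mult_left_le)
      finally show ?thesis .
    qed
    ultimately show "x \<le> f X - fstar + \<bar>L i\<bar> / 2" by linarith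
  qed
  have dnn: "0 \<le> d i" if "i \<in> S" for i
    using dQ cSup_upper[OF zQ[OF that] bddQ[OF that]] by simp
  have Lnn: "0 \<le> L i" if "i \<in> S" for i
    using L_nonneg S that dnn[OF that] unfolding L_def by auto
  have approx: "\<exists>A. A \<in> mats (m i) (n i) \<and> N i A \<le> 1 \<and> d i - e < tr_inner (m i) (n i) (g i) A"
    if iS: "i \<in> S" and e0: "e > 0" for i e
  proof -
    have "d i - e < Sup (Q i)" using dQ e0 by simp
    then obtain x where "x \<in> Q i" "d i - e < x"
      using less_cSup_iff[of "Q i"] zQ[OF iS] bddQ[OF iS] by blast
    then show ?thesis unfolding Q_def by auto
  qed
  define C where "C = (\<Sum>i\<in>S. d i / L i)"
  have Cnn: "0 \<le> C" unfolding C_def using dnn Lnn by (simp add: sum_nonneg)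
  define T where "T = (\<Sum>i\<in>S. (d i)^2 / (2 * L i))"
  have eps: "T \<le> f X - fstar + e * C" if e0: "e > 0" for e
  proof -
    obtain A where A: "\<forall>i\<in>S. A i \<in> mats (m i) (n i) \<and> N i (A i) \<le> 1 \<and> d i - e < tr_inner (m i) (n i) (g i) (A i)"
      using approx[OF _ e0] by metis
    define B where "B i = (\<lambda>r c. (- (d i / L i)) * A i r c)" for i
    have BM: "\<forall>i\<in>S. B i \<in> mats (m i) (n i)" using A mats_scale unfolding B_def by blast
    have each: "tr_inner (m i) (n i) (g i) (B i) + L i / 2 * (N i (B i))^2
         \<le> - ((d i)^2 / (2 * L i)) + e * (d i / L i)" if iS: "i \<in> S" for i
    proof -
      have Ai: "A i \<in> mats (m i) (n i)" "N i (A i) \<le> 1" "d i - e < tr_inner (m i) (n i) (g i) (A i)"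
        using A iS by auto
      define t where "t = d i / L i"
      have t0: "0 \<le> t" unfolding t_def using dnn[OF iS] Lnn[OF iS] by simp
      have trB: "tr_inner (m i) (n i) (g i) (B i) = - t * tr_inner (m i) (n i) (g i) (A i)"
        unfolding B_def t_def by (rule tr_scale)
      have NB: "N i (B i) = t * N i (A i)"
      proof -
        have "N i (B i) = \<bar>- t\<bar> * N i (A i)"
          unfolding B_def t_def by (rule Nscale[OF iS Ai(1)])
        then show ?thesis using t0 by simp
      qed
      have "(N i (A i))^2 \<le> 1" using Nnn[OF iS Ai(1)] Ai(2) by (simp add: power_le_one)
      have "- t * tr_inner (m i) (n i) (g i) (A i) \<le> - t * (d i - e)"
        using Ai(3) t0 by (simp add: mult_left_mono)
      moreover have "L i / 2 * (t * N i (A i))^2 \<le> L i / 2 * t^2"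
        using \<open>(N i (A i))^2 \<le> 1\<close> Lnn[OF iS] t0
        by (simp add: power_mult_distrib mult_left_mono mult_left_le)
      moreover have "- t * (d i - e) + L i / 2 * t^2 = - ((d i)^2 / (2 * L i)) + e * (d i / L i)"
      proof (cases "L i = 0")
        case True then show ?thesis unfolding t_def by simp
      next
        case False then show ?thesis unfolding t_def by (simp add: field_simps power2_eq_square)
      qed
      ultimately show ?thesis unfolding trB NB by linarith
    qed
    have "fstar \<le> f X + (\<Sum>i\<in>S. tr_inner (m i) (n i) (g i) (B i) + L i / 2 * (N i (B i))^2)"
      using key[OF BM] .
    also have "\<dots> \<le> f X + (\<Sum>i\<in>S. - ((d i)^2 / (2 * L i)) + e * (d i / L i))"
      using sum_mono[of S, OF each] by simp
    also have "\<dots> = f X - T + e * C"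
      unfolding T_def C_def by (simp add: sum.distrib sum_negf sum_distrib_left sum_subtractf)
    finally show ?thesis by simp
  qed
  have "T \<le> f X - fstar"
  proof (rule ccontr)
    assume "\<not> ?thesis"
    then have pos: "T - (f X - fstar) > 0" by simp
    define e where "e = (T - (f X - fstar)) / (C + 1)"
    have e0: "e > 0" unfolding e_def using pos Cnn by simp
    have "e * C < T - (f X - fstar)"
    proof -
      have "e * C = (T - (f X - fstar)) * (C / (C + 1))" unfolding e_def by simp
      also have "\<dots> < (T - (f X - fstar)) * 1"
        using pos Cnn by (intro mult_strict_left_mono) auto
      finally show ?thesis by simp
    qed
    then show False using eps[OF e0] by linarith
  qed
  then show ?thesis unfolding T_def d_def g_def L_def .
qed

end
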